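(* Fix $d\ge1$, $N\ge1$, $\alpha\ge2$, powers $P_s,P_r>0$, gains $\xi_{u,v}>0$, and positions $\mathbf{s},\mathbf{1},\dots,\mathbf{N}\in\mathbb{R}^d$ with $\mathbf{s}\neq\mathbf{j}$ for all $j$. For a relay position $\mathbf{r}\in\mathbb{R}^d$ let $\mathsf{SNR}_{u,v}=\xi_{u,v}P_u/\|\mathbf{u}-\mathbf{v}\|^{\alpha}$ for $(u,v)\in\{(s,r),(s,j),(r,j)\}$ (an SNR being $+\infty$ when the distance is $0$). With $\mathsf{C}(x)=\tfrac12\log(1+x)$, $f_j(\rho,\mathbf{r})=\mathsf{SNR}_{s,j}+\mathsf{SNR}_{r,j}+2\rho\sqrt{\mathsf{SNR}_{s,j}\mathsf{SNR}_{r,j}}$, $g^*_j(\rho,\mathbf{r})=(1-\rho^2)\mathsf{SNR}_{s,r}$, $$R_{DF}(\rho,\mathbf{r})=\min_{1\le j\le N}\min\big(\mathsf{C}(f_j(\rho,\mathbf{r})),\mathsf{C}(g^*_j(\rho,\mathbf{r}))\big),\qquad R_{DF}(\mathbf{r})=\max_{\rho\in[0,1]}R_{DF}(\rho,\mathbf{r}),$$ the map $(t,\mathbf{r})\mapsto R_{DF}(\sqrt t,\mathbf{r})$ is quasi-concave on $[0,1]\times\mathbb{R}^d$ (i.e., $R_{DF}(\rho,\mathbf{r})$ is quasi-concave in $(\rho^2,\mathbf{r})$), and $R_{DF}(\mathbf{r})$ is quasi-concave in $\mathbf{r}\in\mathbb{R}^d$.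
   Context: Setting: real AWGN multicast relay channel (decode-forward rate) with source $s$, relay at position $\mathbf{r}$, destinations $1,\dots,N$, path-loss exponent $\alpha$ and channel gains $a_{u,v}=\sqrt{\xi_{u,v}}/\|\mathbf{u}-\mathbf{v}\|^{\alpha/2}$; $\rho$ is the source–relay input correlation coefficient. A function $F$ (possibly taking value $+\infty$) on a convex set is quasi-concave if $F(\lambda x_1+(1-\lambda)x_2)\ge\min(F(x_1),F(x_2))$ for all $x_1,x_2$ and $\lambda\in[0,1]$. *)

theory Defs
  imports "HOL-Analysis.Analysis" "HOL-Library.Extended_Real"
begin

definition quasiconcave_on :: "'a::real_vector set \<Rightarrow> ('a \<Rightarrow> ereal) \<Rightarrow> bool" where
  "quasiconcave_on S F \<longleftrightarrow>
     (\<forall>x\<in>S. \<forall>y\<in>S. \<forall>l\<in>{0..1::real}.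
        F (l *\<^sub>R x + (1 - l) *\<^sub>R y) \<ge> min (F x) (F y))"

definition SNR :: "real \<Rightarrow> real \<Rightarrow> real \<Rightarrow> 'd::real_normed_vector \<Rightarrow> 'd \<Rightarrow> ereal" where
  "SNR alpha xi P u v = (if u = v then \<infinity> else ereal (xi * P / (norm (u - v) powr alpha)))"

definition esqrt :: "ereal \<Rightarrow> ereal" where
  "esqrt x = (if x = \<infinity> then \<infinity> else ereal (sqrt (real_of_ereal x)))"

definition Ccap :: "ereal \<Rightarrow> ereal" where
  "Ccap x = (if x = \<infinity> then \<infinity> else ereal (ln (1 + real_of_ereal x) / 2))"

text \<open>f_j(rho, r); s = source position, pos j = position of destination j.\<close>
definition f_j :: "real \<Rightarrow> real \<Rightarrow> real \<Rightarrow> (nat \<Rightarrow> real) \<Rightarrow> (nat \<Rightarrow> real)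
    \<Rightarrow> 'd::real_normed_vector \<Rightarrow> (nat \<Rightarrow> 'd) \<Rightarrow> nat \<Rightarrow> real \<Rightarrow> 'd \<Rightarrow> ereal" where
  "f_j alpha Ps Pr xi_sj xi_rj s pos j rho r =
     (let a = SNR alpha (xi_sj j) Ps s (pos j); b = SNR alpha (xi_rj j) Pr r (pos j)
      in a + b + ereal (2 * rho) * esqrt (a * b))"

definition g_star :: "real \<Rightarrow> real \<Rightarrow> real \<Rightarrow> 'd::real_normed_vector \<Rightarrow> real \<Rightarrow> 'd \<Rightarrow> ereal" where
  "g_star alpha Ps xi_sr s rho r = ereal (1 - rho\<^sup>2) * SNR alpha xi_sr Ps s r"

definition R_DF_rho :: "real \<Rightarrow> nat \<Rightarrow> real \<Rightarrow> real \<Rightarrow> real \<Rightarrow> (nat \<Rightarrow> real) \<Rightarrow> (nat \<Rightarrow> real)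
    \<Rightarrow> 'd::real_normed_vector \<Rightarrow> (nat \<Rightarrow> 'd) \<Rightarrow> real \<Rightarrow> 'd \<Rightarrow> ereal" where
  "R_DF_rho alpha N Ps Pr xi_sr xi_sj xi_rj s pos rho r =
     Min ((\<lambda>j. min (Ccap (f_j alpha Ps Pr xi_sj xi_rj s pos j rho r))
                    (Ccap (g_star alpha Ps xi_sr s rho r))) ` {1..N})"

definition R_DF :: "real \<Rightarrow> nat \<Rightarrow> real \<Rightarrow> real \<Rightarrow> real \<Rightarrow> (nat \<Rightarrow> real) \<Rightarrow> (nat \<Rightarrow> real)
    \<Rightarrow> 'd::real_normed_vector \<Rightarrow> (nat \<Rightarrow> 'd) \<Rightarrow> 'd \<Rightarrow> ereal" where
  "R_DF alpha N Ps Pr xi_sr xi_sj xi_rj s pos r =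
     (SUP rho\<in>{0..1}. R_DF_rho alpha N Ps Pr xi_sr xi_sj xi_rj s pos rho r)"

end

theory Submission imports Defs begin

lemma sqrt_concave:
  fixes X Y l :: real
  assumes "X \<ge> 0" "Y \<ge> 0" "0 \<le> l" "l \<le> 1"
  shows "l * sqrt X + (1-l) * sqrt Y \<le> sqrt (l*X + (1-l)*Y)"
proof (rule real_le_rsqrt)
  have a: "2 * (sqrt X * sqrt Y) \<le> X + Y"
  proof -
    have "0 \<le> (sqrt X - sqrt Y)\<^sup>2" by simp
    also have "\<dots> = (sqrt X)\<^sup>2 + (sqrt Y)\<^sup>2 - 2 * (sqrt X * sqrt Y)" by (simp add: power2_eq_square algebra_simps)
    also have "\<dots> = X + Y - 2 * (sqrt X * sqrt Y)" using assms by simp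
    finally show ?thesis by simp
  qed
  have "(l * sqrt X + (1-l) * sqrt Y)\<^sup>2 = l*l*X + (1-l)*(1-l)*Y + l*(1-l)*(2*(sqrt X * sqrt Y))"
    using assms by (simp add: power2_eq_square algebra_simps)
  also have "\<dots> \<le> l*l*X + (1-l)*(1-l)*Y + l*(1-l)*(X+Y)"
    using a assms by (intro add_left_mono mult_left_mono) auto
  also have "\<dots> = l*X + (1-l)*Y" by (simp add: algebra_simps)
  finally show "(l * sqrt X + (1-l) * sqrt Y)\<^sup>2 \<le> l*X + (1-l)*Y" .
qed

lemma powr_convex0:
  fixes x y l p :: real
  assumes "p \<ge> 1" "x \<ge> 0" "y \<ge> 0" "0 \<le> l" "l \<le> 1"
  shows "(l*x + (1-l)*y) powr p \<le> l * x powr p + (1-l) * y powr p"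
proof -
  consider "x > 0" "y > 0" | "x = 0" | "y = 0" using assms by linarith
  then show ?thesis
  proof cases
    case 1
    then show ?thesis using convex_onD[OF powr_convex[OF assms(1)], of "1-l" x y] assms by auto
  next
    case 2
    have "(1-l) powr p \<le> (1-l) powr 1" using assms
      by (intro powr_mono') auto
    hence "(1-l) powr p * y powr p \<le> (1-l) * y powr p" using assms by (intro mult_right_mono) auto
    then show ?thesis using 2 assms by (simp add: powr_mult)
  next
    case 3
    have "l powr p \<le> l powr 1" using assms
      by (intro powr_mono') auto
    hence "l powr p * x powr p \<le> l * x powr p" using assms by (intro mult_right_mono) auto
    then show ?thesis using 3 assms by (simp add: powr_mult)
  qed
qed

lemma norm_conv:
  fixes r1 r2 p :: "'a::real_normed_vector"
  assumes "0 \<le> l" "l \<le> 1"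
  shows "norm (l *\<^sub>R r1 + (1-l) *\<^sub>R r2 - p) \<le> l * norm (r1 - p) + (1-l) * norm (r2 - p)"
proof -
  have "l *\<^sub>R r1 + (1-l) *\<^sub>R r2 - p = l *\<^sub>R (r1 - p) + (1-l) *\<^sub>R (r2 - p)"
    by (simp add: algebra_simps)
  also have "norm \<dots> \<le> norm (l *\<^sub>R (r1 - p)) + norm ((1-l) *\<^sub>R (r2 - p))" by (rule norm_triangle_ineq)
  also have "\<dots> = l * norm (r1 - p) + (1-l) * norm (r2 - p)" using assms by simp
  finally show ?thesis .
qed

lemma f_real:
  fixes a K t d alpha c :: real
  assumes "a > 0" "K > 0" "0 \<le> t" "d > 0" "alpha > 0"
  shows "c \<le> a + K / d powr alpha + 2 * sqrt t * sqrt (a * (K / d powr alpha)) \<longleftrightarrow>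
     (c \<le> a \<or> (c-a) * d powr (alpha/2) \<le> sqrt K * (sqrt (c-a+a*t) + sqrt (a*t)))"
proof -
  define D where "D = d powr (alpha/2)"
  have D: "D > 0" using assms by (simp add: D_def)
  have dD: "d powr alpha = D\<^sup>2" unfolding D_def using assms
    by (simp add: power2_eq_square flip: powr_add)
  define u where "u = sqrt K / D"
  have u: "u \<ge> 0" using D assms by (simp add: u_def)
  define w where "w = sqrt (a*t)"
  have w: "w \<ge> 0" using assms by (simp add: w_def)
  have b: "K / d powr alpha = u\<^sup>2" using assms D by (simp add: dD u_def power_divide)
  have sq: "sqrt t * sqrt (a * (K / d powr alpha)) = w * u"
    using assms u by (simp add: b w_def real_sqrt_mult)
  have L: "a + K / d powr alpha + 2 * sqrt t * sqrt (a * (K / d powr alpha)) = a + u\<^sup>2 + 2*w*u"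
    using sq b by simp
  show ?thesis
  proof (cases "c \<le> a")
    case True
    then show ?thesis unfolding L using u w by (smt (verit) mult_nonneg_nonneg zero_le_power2)
  next
    case False
    define S where "S = sqrt (c-a+a*t)"
    have pos: "0 < c-a+a*t" using False assms mult_nonneg_nonneg[of a t] by linarith
    have S: "S > 0" using pos by (simp add: S_def)
    have S2: "S\<^sup>2 = c-a+a*t" using pos by (simp add: S_def)
    have w2: "w\<^sup>2 = a*t" using assms by (simp add: w_def)
    have "c \<le> a + u\<^sup>2 + 2*w*u \<longleftrightarrow> S\<^sup>2 \<le> (u+w)\<^sup>2"
      using S2 w2 by (simp add: power2_eq_square algebra_simps) linarith
    also have "\<dots> \<longleftrightarrow> S \<le> u + w" using S u w abs_le_square_iff[of S "u+w"] by simp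
    also have "\<dots> \<longleftrightarrow> S*S - w*w \<le> u*(S+w)"
    proof -
      have "S*S - w*w = (S - w)*(S+w)" by (simp add: algebra_simps)
      moreover have "S + w > 0" using S w by simp
      ultimately show ?thesis by (smt (verit) mult_le_cancel_right)
    qed
    also have "\<dots> \<longleftrightarrow> (c-a) * D \<le> sqrt K * (S+w)"
    proof -
      have "S*S - w*w = c - a" using S2 w2 by (simp add: power2_eq_square)
      moreover have "u*(S+w) = sqrt K * (S+w) / D" by (simp add: u_def)
      ultimately show ?thesis using D by (simp add: pos_le_divide_eq)
    qed
    finally show ?thesis unfolding L using False by (simp add: S_def w_def D_def)
  qed
qed

lemma f_level:
  fixes r p :: "'d::real_normed_vector"
  assumes "a > 0" "xr * Pr > 0" "0 \<le> t" "alpha > 0"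
  shows "(ereal c \<le> ereal a + SNR alpha xr Pr r p + ereal (2 * sqrt t) * esqrt (ereal a * SNR alpha xr Pr r p))
     \<longleftrightarrow> (c \<le> a \<or> (c-a) * norm (r-p) powr (alpha/2) \<le> sqrt (xr*Pr) * (sqrt (c-a+a*t) + sqrt (a*t)))"
proof (cases "r = p")
  case True
  have "ereal a * \<infinity> = \<infinity>" using assms by simp
  moreover have "ereal (2 * sqrt t) * \<infinity> \<ge> 0" using assms by simp
  ultimately have E: "ereal a + SNR alpha xr Pr r p + ereal (2 * sqrt t) * esqrt (ereal a * SNR alpha xr Pr r p) = \<infinity>"
    using True by (simp add: SNR_def esqrt_def)
  have R: "c \<le> a \<or> (c-a) * norm (r-p) powr (alpha/2) \<le> sqrt (xr*Pr) * (sqrt (c-a+a*t) + sqrt (a*t))"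
    using True assms mult_nonneg_nonneg[of a t] by (auto intro!: mult_nonneg_nonneg add_nonneg_nonneg)
  show ?thesis unfolding E using R by simp
next
  case False
  define d where "d = norm (r - p)"
  have d: "d > 0" using False by (simp add: d_def)
  have nn: "a * (xr * Pr / d powr alpha) \<ge> 0" using assms d by simp
  have "ereal a + SNR alpha xr Pr r p + ereal (2 * sqrt t) * esqrt (ereal a * SNR alpha xr Pr r p)
     = ereal (a + xr * Pr / d powr alpha + 2 * sqrt t * sqrt (a * (xr * Pr / d powr alpha)))"
    using False by (simp add: SNR_def esqrt_def d_def)
  then show ?thesis using f_real[OF assms(1,2,3) d assms(4), of c] by (simp add: d_def)
qed

lemma g_level:
  fixes r s :: "'d::real_normed_vector"
  assumes "K > 0" "0 \<le> t" "t \<le> 1" "alpha > 0" and that: "xs * Ps = K"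
  shows "(ereal c \<le> ereal (1 - (sqrt t)\<^sup>2) * SNR alpha xs Ps s r)
     \<longleftrightarrow> (c \<le> 0 \<or> (t < 1 \<and> c * norm (s-r) powr alpha \<le> (1-t) * K))"
proof (cases "s = r")
  case True
  then show ?thesis using assms by (auto simp: SNR_def)
next
  case False
  define d where "d = norm (s - r)"
  have d: "d > 0" using False by (simp add: d_def)
  have "ereal (1 - (sqrt t)\<^sup>2) * SNR alpha xs Ps s r = ereal ((1-t) * (K / d powr alpha))"
    using False assms that by (simp add: SNR_def d_def)
  moreover have "c \<le> (1-t) * (K / d powr alpha) \<longleftrightarrow> (c \<le> 0 \<or> (t < 1 \<and> c * d powr alpha \<le> (1-t) * K))"
  proof -
    have "c \<le> (1-t) * (K / d powr alpha) \<longleftrightarrow> c * d powr alpha \<le> (1-t) * K"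
      using d by (simp add: pos_le_divide_eq)
    moreover have "t = 1 \<Longrightarrow> (c * d powr alpha \<le> 0 \<longleftrightarrow> c \<le> 0)" using d
      by (simp add: mult_le_0_iff)
    moreover have "c \<le> 0 \<Longrightarrow> c * d powr alpha \<le> (1-t) * K" using d assms
      by (smt (verit) mult_nonneg_nonneg mult_nonpos_nonneg powr_ge_zero)
    ultimately show ?thesis using assms by (cases "t = 1") auto
  qed
  ultimately show ?thesis by (simp add: d_def)
qed

lemma f_conv:
  fixes r1 r2 p :: "'d::real_normed_vector"
  assumes "a > 0" "K > 0" "alpha \<ge> 2" "0 \<le> l" "l \<le> 1" "0 \<le> t1" "0 \<le> t2"
    and P1: "c \<le> a \<or> (c-a) * norm (r1-p) powr (alpha/2) \<le> sqrt K * (sqrt (c-a+a*t1) + sqrt (a*t1))"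
    and P2: "c \<le> a \<or> (c-a) * norm (r2-p) powr (alpha/2) \<le> sqrt K * (sqrt (c-a+a*t2) + sqrt (a*t2))"
  shows "c \<le> a \<or> (c-a) * norm (l *\<^sub>R r1 + (1-l) *\<^sub>R r2 - p) powr (alpha/2)
            \<le> sqrt K * (sqrt (c-a+a*(l*t1+(1-l)*t2)) + sqrt (a*(l*t1+(1-l)*t2)))"
proof (cases "c \<le> a")
  case True then show ?thesis by simp
next
  case False
  define d1 where "d1 = norm (r1-p)"
  define d2 where "d2 = norm (r2-p)"
  define b where "b = alpha/2"
  have b: "b \<ge> 1" using assms by (simp add: b_def)
  have Q1: "(c-a) * d1 powr b \<le> sqrt K * (sqrt (c-a+a*t1) + sqrt (a*t1))"
    using P1 False by (simp add: d1_def b_def)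
  have Q2: "(c-a) * d2 powr b \<le> sqrt K * (sqrt (c-a+a*t2) + sqrt (a*t2))"
    using P2 False by (simp add: d2_def b_def)
  have "norm (l *\<^sub>R r1 + (1-l) *\<^sub>R r2 - p) powr b \<le> (l*d1 + (1-l)*d2) powr b"
    using norm_conv[OF assms(4,5), of r1 r2 p] b unfolding d1_def d2_def
    by (intro powr_mono2) auto
  also have "\<dots> \<le> l * d1 powr b + (1-l) * d2 powr b"
    using b assms by (intro powr_convex0) (auto simp: d1_def d2_def)
  finally have n: "norm (l *\<^sub>R r1 + (1-l) *\<^sub>R r2 - p) powr b \<le> l * d1 powr b + (1-l) * d2 powr b" .
  have "(c-a) * norm (l *\<^sub>R r1 + (1-l) *\<^sub>R r2 - p) powr b \<le> (c-a) * (l * d1 powr b + (1-l) * d2 powr b)"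
    using n False by (intro mult_left_mono) auto
  also have "\<dots> = l * ((c-a) * d1 powr b) + (1-l) * ((c-a) * d2 powr b)" by (simp add: algebra_simps)
  also have "\<dots> \<le> l * (sqrt K * (sqrt (c-a+a*t1) + sqrt (a*t1))) + (1-l) * (sqrt K * (sqrt (c-a+a*t2) + sqrt (a*t2)))"
    using Q1 Q2 assms by (intro add_mono mult_left_mono) auto
  also have "\<dots> = sqrt K * ((l * sqrt (c-a+a*t1) + (1-l) * sqrt (c-a+a*t2)) + (l * sqrt (a*t1) + (1-l) * sqrt (a*t2)))"
    by (simp add: algebra_simps)
  also have "\<dots> \<le> sqrt K * (sqrt (l*(c-a+a*t1) + (1-l)*(c-a+a*t2)) + sqrt (l*(a*t1) + (1-l)*(a*t2)))"
    using assms False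
    by (intro mult_left_mono add_mono sqrt_concave) auto
  also have "\<dots> = sqrt K * (sqrt (c-a+a*(l*t1+(1-l)*t2)) + sqrt (a*(l*t1+(1-l)*t2)))"
    by (simp add: algebra_simps)
  finally show ?thesis by (simp add: b_def)
qed

lemma g_conv:
  fixes r1 r2 s :: "'d::real_normed_vector"
  assumes "K > 0" "alpha \<ge> 2" "0 \<le> l" "l \<le> 1"
    and P1: "c \<le> 0 \<or> (t1 < 1 \<and> c * norm (s-r1) powr alpha \<le> (1-t1) * K)"
    and P2: "c \<le> 0 \<or> (t2 < 1 \<and> c * norm (s-r2) powr alpha \<le> (1-t2) * K)"
  shows "c \<le> 0 \<or> (l*t1+(1-l)*t2 < 1 \<and> c * norm (s - (l *\<^sub>R r1 + (1-l) *\<^sub>R r2)) powr alpha \<le> (1-(l*t1+(1-l)*t2)) * K)"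
proof (cases "c \<le> 0")
  case True then show ?thesis by simp
next
  case False
  define d1 where "d1 = norm (r1-s)"
  define d2 where "d2 = norm (r2-s)"
  have Q1: "t1 < 1" "c * d1 powr alpha \<le> (1-t1) * K"
    using P1 False by (auto simp: d1_def norm_minus_commute)
  have Q2: "t2 < 1" "c * d2 powr alpha \<le> (1-t2) * K"
    using P2 False by (auto simp: d2_def norm_minus_commute)
  have T: "l*t1+(1-l)*t2 < 1"
  proof (cases "l = 0")
    case True then show ?thesis using Q2 by simp
  next
    case False
    then have "l*t1 < l*1" using Q1 assms by (intro mult_strict_left_mono) auto
    moreover have "(1-l)*t2 \<le> (1-l)*1" using Q2 assms by (intro mult_left_mono) auto
    ultimately have "l*t1 < l" "(1-l)*t2 \<le> 1-l" by simp_all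
    then show ?thesis by linarith
  qed
  have e: "norm (s - (l *\<^sub>R r1 + (1-l) *\<^sub>R r2)) = norm (l *\<^sub>R r1 + (1-l) *\<^sub>R r2 - s)"
    by (rule norm_minus_commute)
  have "norm (l *\<^sub>R r1 + (1-l) *\<^sub>R r2 - s) powr alpha \<le> (l*d1 + (1-l)*d2) powr alpha"
    using norm_conv[OF assms(3,4), of r1 r2 s] assms unfolding d1_def d2_def
    by (intro powr_mono2) auto
  also have "\<dots> \<le> l * d1 powr alpha + (1-l) * d2 powr alpha"
    using assms by (intro powr_convex0) (auto simp: d1_def d2_def)
  finally have n: "norm (l *\<^sub>R r1 + (1-l) *\<^sub>R r2 - s) powr alpha \<le> l * d1 powr alpha + (1-l) * d2 powr alpha" .
  have "c * norm (l *\<^sub>R r1 + (1-l) *\<^sub>R r2 - s) powr alpha \<le> c * (l * d1 powr alpha + (1-l) * d2 powr alpha)"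
    using n False by (intro mult_left_mono) auto
  also have "\<dots> = l * (c * d1 powr alpha) + (1-l) * (c * d2 powr alpha)" by (simp add: algebra_simps)
  also have "\<dots> \<le> l * ((1-t1) * K) + (1-l) * ((1-t2) * K)"
    using Q1 Q2 assms by (intro add_mono mult_left_mono) auto
  also have "\<dots> = (1-(l*t1+(1-l)*t2)) * K" by (simp add: algebra_simps)
  finally show ?thesis using T e by simp
qed

lemma level_min:
  fixes X Y Z :: ereal
  assumes "\<And>c. ereal c \<le> X \<Longrightarrow> ereal c \<le> Y \<Longrightarrow> ereal c \<le> Z"
  shows "min X Y \<le> Z"
proof (rule ccontr)
  assume "\<not> min X Y \<le> Z"
  then have "Z < min X Y" by (rule not_le_imp_less)
  then obtain c where "Z < ereal c" "ereal c < min X Y" using ereal_dense2 by blast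
  then have "ereal c \<le> X" "ereal c \<le> Y" by auto
  then have "ereal c \<le> Z" by (rule assms)
  then show False using \<open>Z < ereal c\<close> by simp
qed

lemma Ccap_mono:
  assumes "0 \<le> X" "X \<le> Y"
  shows "Ccap X \<le> Ccap Y"
proof (cases "Y = \<infinity>")
  case True then show ?thesis by (simp add: Ccap_def)
next
  case False
  then have "X \<noteq> \<infinity>" using assms by auto
  moreover have "X \<noteq> -\<infinity>" "Y \<noteq> -\<infinity>" using assms by auto
  ultimately obtain x y where "X = ereal x" "Y = ereal y" using False
    by (metis ereal_cases)
  then show ?thesis using assms False by (simp add: Ccap_def)
qed

lemma Ccap_min:
  assumes "0 \<le> X" "0 \<le> Y" "min X Y \<le> Z"
  shows "min (Ccap X) (Ccap Y) \<le> Ccap Z"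
proof (cases "X \<le> Y")
  case True
  then have "Ccap X \<le> Ccap Z" using assms by (intro Ccap_mono) auto
  then show ?thesis by (simp add: min_le_iff_disj)
next
  case False
  then have "Ccap Y \<le> Ccap Z" using assms by (intro Ccap_mono) auto
  then show ?thesis by (simp add: min_le_iff_disj)
qed

lemma Min_min:
  fixes A B C :: "nat \<Rightarrow> ereal"
  assumes "finite J" "J \<noteq> {}" "\<And>j. j \<in> J \<Longrightarrow> min (A j) (B j) \<le> C j"
  shows "min (Min (A ` J)) (Min (B ` J)) \<le> Min (C ` J)"
proof -
  have "Min (C ` J) \<in> C ` J" using assms by (intro Min_in) auto
  then obtain k where k: "k \<in> J" "Min (C ` J) = C k" by auto
  have "Min (A ` J) \<le> A k" "Min (B ` J) \<le> B k" using k assms by auto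
  then show ?thesis using k assms(3)[OF k(1)] by (simp add: min_le_iff_disj) (meson order_trans)
qed

lemma Sup_min:
  fixes M :: ereal
  assumes "\<And>a b. a \<in> A \<Longrightarrow> b \<in> B \<Longrightarrow> min a b \<le> M"
  shows "min (Sup A) (Sup B) \<le> M"
proof (rule ccontr)
  assume "\<not> ?thesis"
  then have "M < min (Sup A) (Sup B)" by (rule not_le_imp_less)
  then have "M < Sup A" "M < Sup B" by auto
  then obtain a b where "a \<in> A" "M < a" "b \<in> B" "M < b" by (auto simp: less_Sup_iff)
  then have "min a b \<le> M" using assms by blast
  then show False using \<open>M < a\<close> \<open>M < b\<close> by (metis leD min_le_iff_disj)
qed

context
  fixes alpha Ps Pr xi_sr :: real and N :: nat
    and xi_sj xi_rj :: "nat \<Rightarrow> real"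
    and s :: "'d::real_normed_vector" and pos :: "nat \<Rightarrow> 'd"
  assumes N: "N \<ge> 1" and al: "alpha \<ge> 2" and Ps: "Ps > 0" and Pr: "Pr > 0" and xsr: "xi_sr > 0"
    and xsj: "\<And>j. j \<in> {1..N} \<Longrightarrow> xi_sj j > 0"
    and xrj: "\<And>j. j \<in> {1..N} \<Longrightarrow> xi_rj j > 0"
    and sp: "\<And>j. j \<in> {1..N} \<Longrightarrow> s \<noteq> pos j"
begin

lemma fj_qc:
  assumes j: "j \<in> {1..N}" and "0 \<le> l" "l \<le> 1" "0 \<le> t1" "0 \<le> t2"
  defines "F \<equiv> \<lambda>t r. f_j alpha Ps Pr xi_sj xi_rj s pos j (sqrt t) r"
  shows "min (F t1 r1) (F t2 r2) \<le> F (l*t1+(1-l)*t2) (l *\<^sub>R r1 + (1-l) *\<^sub>R r2)"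
    and "0 \<le> F t1 r1"
proof -
  define a where "a = xi_sj j * Ps / norm (s - pos j) powr alpha"
  have a: "a > 0" using xsj[OF j] Ps sp[OF j] by (simp add: a_def)
  have K: "xi_rj j * Pr > 0" using xrj[OF j] Pr by simp
  have alp: "alpha > 0" using al by simp
  have Feq: "F t r = ereal a + SNR alpha (xi_rj j) Pr r (pos j) + ereal (2 * sqrt t) * esqrt (ereal a * SNR alpha (xi_rj j) Pr r (pos j))" for t r
    unfolding F_def f_j_def using sp[OF j] by (simp add: SNR_def a_def Let_def)
  have lev: "0 \<le> t \<Longrightarrow> ereal c \<le> F t r \<longleftrightarrow> (c \<le> a \<or> (c-a) * norm (r-pos j) powr (alpha/2) \<le> sqrt (xi_rj j * Pr) * (sqrt (c-a+a*t) + sqrt (a*t)))" for c t r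
    unfolding Feq by (rule f_level[OF a K _ alp])
  have tz: "0 \<le> l*t1+(1-l)*t2" using assms by simp
  show "min (F t1 r1) (F t2 r2) \<le> F (l*t1+(1-l)*t2) (l *\<^sub>R r1 + (1-l) *\<^sub>R r2)"
  proof (rule level_min)
    fix c assume "ereal c \<le> F t1 r1" "ereal c \<le> F t2 r2"
    then have "c \<le> a \<or> (c-a) * norm (r1-pos j) powr (alpha/2) \<le> sqrt (xi_rj j * Pr) * (sqrt (c-a+a*t1) + sqrt (a*t1))"
      "c \<le> a \<or> (c-a) * norm (r2-pos j) powr (alpha/2) \<le> sqrt (xi_rj j * Pr) * (sqrt (c-a+a*t2) + sqrt (a*t2))"
      using lev assms by auto
    from f_conv[OF a K al assms(2,3,4,5) this]
    show "ereal c \<le> F (l*t1+(1-l)*t2) (l *\<^sub>R r1 + (1-l) *\<^sub>R r2)" using lev[OF tz] by blast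
  qed
  show "0 \<le> F t1 r1" using lev[OF assms(4), of 0] a by (simp add: zero_ereal_def)
qed

lemma g_qc:
  assumes "0 \<le> l" "l \<le> 1" "0 \<le> t1" "t1 \<le> 1" "0 \<le> t2" "t2 \<le> 1"
  defines "G \<equiv> \<lambda>t r. g_star alpha Ps xi_sr s (sqrt t) r"
  shows "min (G t1 r1) (G t2 r2) \<le> G (l*t1+(1-l)*t2) (l *\<^sub>R r1 + (1-l) *\<^sub>R r2)"
    and "0 \<le> G t1 r1"
proof -
  have K: "xi_sr * Ps > 0" using xsr Ps by simp
  have alp: "alpha > 0" using al by simp
  have lev: "0 \<le> t \<Longrightarrow> t \<le> 1 \<Longrightarrow> ereal c \<le> G t r \<longleftrightarrow> (c \<le> 0 \<or> (t < 1 \<and> c * norm (s-r) powr alpha \<le> (1-t) * (xi_sr * Ps)))" for c t r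
    unfolding G_def g_star_def by (rule g_level[OF K _ _ alp refl])
  have tz: "0 \<le> l*t1+(1-l)*t2" using assms by simp
  have tz1: "l*t1+(1-l)*t2 \<le> 1"
  proof -
    have "l*t1 \<le> l*1" "(1-l)*t2 \<le> (1-l)*1" using assms by (intro mult_left_mono; simp)+
    then show ?thesis by simp
  qed
  show "min (G t1 r1) (G t2 r2) \<le> G (l*t1+(1-l)*t2) (l *\<^sub>R r1 + (1-l) *\<^sub>R r2)"
  proof (rule level_min)
    fix c assume "ereal c \<le> G t1 r1" "ereal c \<le> G t2 r2"
    then have "c \<le> 0 \<or> (t1 < 1 \<and> c * norm (s-r1) powr alpha \<le> (1-t1) * (xi_sr * Ps))"
      "c \<le> 0 \<or> (t2 < 1 \<and> c * norm (s-r2) powr alpha \<le> (1-t2) * (xi_sr * Ps))"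
      using lev assms by auto
    from g_conv[OF K al assms(1,2) this]
    show "ereal c \<le> G (l*t1+(1-l)*t2) (l *\<^sub>R r1 + (1-l) *\<^sub>R r2)" using lev[OF tz tz1] by blast
  qed
  show "0 \<le> G t1 r1" using lev[OF assms(3,4), of 0] by (simp add: zero_ereal_def)
qed

lemma part1:
  assumes "0 \<le> l" "l \<le> 1" "0 \<le> t1" "t1 \<le> 1" "0 \<le> t2" "t2 \<le> 1"
  shows "min (R_DF_rho alpha N Ps Pr xi_sr xi_sj xi_rj s pos (sqrt t1) r1)
             (R_DF_rho alpha N Ps Pr xi_sr xi_sj xi_rj s pos (sqrt t2) r2)
         \<le> R_DF_rho alpha N Ps Pr xi_sr xi_sj xi_rj s pos (sqrt (l*t1+(1-l)*t2)) (l *\<^sub>R r1 + (1-l) *\<^sub>R r2)"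
  unfolding R_DF_rho_def
proof (rule Min_min)
  show "finite {1..N}" by simp
  show "{1..N} \<noteq> {}" using N by simp
  fix j assume j: "j \<in> {1..N}"
  let ?f = "\<lambda>t r. f_j alpha Ps Pr xi_sj xi_rj s pos j (sqrt t) r"
  let ?g = "\<lambda>t r. g_star alpha Ps xi_sr s (sqrt t) r"
  let ?z = "l *\<^sub>R r1 + (1-l) *\<^sub>R r2"
  let ?tz = "l*t1+(1-l)*t2"
  have A: "min (Ccap (?f t1 r1)) (Ccap (?f t2 r2)) \<le> Ccap (?f ?tz ?z)"
    using fj_qc[OF j assms(1,2,3,5)] fj_qc(2)[OF j assms(1,2,5,3)]
    by (intro Ccap_min) auto
  have B: "min (Ccap (?g t1 r1)) (Ccap (?g t2 r2)) \<le> Ccap (?g ?tz ?z)"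
    using g_qc[OF assms] g_qc(2)[OF assms(1,2,5,6,3,4)]
    by (intro Ccap_min) auto
  show "min (min (Ccap (?f t1 r1)) (Ccap (?g t1 r1))) (min (Ccap (?f t2 r2)) (Ccap (?g t2 r2)))
        \<le> min (Ccap (?f ?tz ?z)) (Ccap (?g ?tz ?z))"
    using A B by (auto simp: min_le_iff_disj min.bounded_iff intro: order_trans)
qed

end

theorem theorem5:
  fixes alpha Ps Pr xi_sr :: real and N :: nat
    and xi_sj xi_rj :: "nat \<Rightarrow> real"
    and s :: "real ^ 'd" and pos :: "nat \<Rightarrow> real ^ 'd"
  assumes "N \<ge> 1" and "alpha \<ge> 2" and "Ps > 0" and "Pr > 0" and "xi_sr > 0"
    and "\<And>j. j \<in> {1..N} \<Longrightarrow> xi_sj j > 0"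
    and "\<And>j. j \<in> {1..N} \<Longrightarrow> xi_rj j > 0"
    and "\<And>j. j \<in> {1..N} \<Longrightarrow> s \<noteq> pos j"
  shows "quasiconcave_on ({0..1} \<times> UNIV)
           (\<lambda>(t, r). R_DF_rho alpha N Ps Pr xi_sr xi_sj xi_rj s pos (sqrt t) r)
       \<and> quasiconcave_on UNIV (R_DF alpha N Ps Pr xi_sr xi_sj xi_rj s pos)"
proof
  have P1: "\<And>l ta tb ra rb. 0 \<le> l \<Longrightarrow> l \<le> 1 \<Longrightarrow> 0 \<le> ta \<Longrightarrow> ta \<le> 1 \<Longrightarrow> 0 \<le> tb \<Longrightarrow> tb \<le> 1 \<Longrightarrow>
     min (R_DF_rho alpha N Ps Pr xi_sr xi_sj xi_rj s pos (sqrt ta) ra)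
             (R_DF_rho alpha N Ps Pr xi_sr xi_sj xi_rj s pos (sqrt tb) rb)
         \<le> R_DF_rho alpha N Ps Pr xi_sr xi_sj xi_rj s pos (sqrt (l*ta+(1-l)*tb)) (l *\<^sub>R ra + (1-l) *\<^sub>R rb)"
    by (rule part1[OF assms])
  show "quasiconcave_on ({0..1} \<times> UNIV)
           (\<lambda>(t, r). R_DF_rho alpha N Ps Pr xi_sr xi_sj xi_rj s pos (sqrt t) r)"
    unfolding quasiconcave_on_def
  proof (intro ballI)
    fix x y l assume x: "x \<in> {0..1::real} \<times> (UNIV :: (real^'d) set)" and y: "y \<in> {0..1::real} \<times> (UNIV :: (real^'d) set)"
      and l: "l \<in> {0..1::real}"
    obtain t1 r1 where x': "x = (t1, r1)" by (cases x)
    obtain t2 r2 where y': "y = (t2, r2)" by (cases y)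
    have "l *\<^sub>R x + (1 - l) *\<^sub>R y = (l*t1+(1-l)*t2, l *\<^sub>R r1 + (1-l) *\<^sub>R r2)"
      unfolding x' y' by simp
    then show "min ((\<lambda>(t, r). R_DF_rho alpha N Ps Pr xi_sr xi_sj xi_rj s pos (sqrt t) r) x)
                   ((\<lambda>(t, r). R_DF_rho alpha N Ps Pr xi_sr xi_sj xi_rj s pos (sqrt t) r) y)
         \<le> (\<lambda>(t, r). R_DF_rho alpha N Ps Pr xi_sr xi_sj xi_rj s pos (sqrt t) r) (l *\<^sub>R x + (1 - l) *\<^sub>R y)"
      using P1[where l=l and ta=t1 and tb=t2 and ra=r1 and rb=r2] x y l unfolding x' y' by simp
  qed
  show "quasiconcave_on UNIV (R_DF alpha N Ps Pr xi_sr xi_sj xi_rj s pos)"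
    unfolding quasiconcave_on_def R_DF_def
  proof (intro ballI)
    fix r1 r2 :: "real^'d" and l :: real assume l: "l \<in> {0..1}"
    let ?R = "R_DF_rho alpha N Ps Pr xi_sr xi_sj xi_rj s pos"
    let ?z = "l *\<^sub>R r1 + (1 - l) *\<^sub>R r2"
    show "min (SUP rho\<in>{0..1}. ?R rho r1) (SUP rho\<in>{0..1}. ?R rho r2) \<le> (SUP rho\<in>{0..1}. ?R rho ?z)"
    proof (rule Sup_min)
      fix a b assume "a \<in> (\<lambda>rho. ?R rho r1) ` {0..1}" "b \<in> (\<lambda>rho. ?R rho r2) ` {0..1}"
      then obtain p1 p2 where p: "p1 \<in> {0..1}" "a = ?R p1 r1" "p2 \<in> {0..1}" "b = ?R p2 r2" by auto
      define tz where "tz = l * p1\<^sup>2 + (1-l) * p2\<^sup>2"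
      have t1: "0 \<le> p1\<^sup>2" "p1\<^sup>2 \<le> 1" using p by (auto simp: power_le_one)
      have t2: "0 \<le> p2\<^sup>2" "p2\<^sup>2 \<le> 1" using p by (auto simp: power_le_one)
      have tz0: "0 \<le> tz" using l t1 t2 by (simp add: tz_def)
      have tz1: "tz \<le> 1"
      proof -
        have "l*p1\<^sup>2 \<le> l*1" "(1-l)*p2\<^sup>2 \<le> (1-l)*1" using l t1 t2 by (intro mult_left_mono; simp)+
        then show ?thesis by (simp add: tz_def)
      qed
      have "min a b \<le> ?R (sqrt tz) ?z"
        using P1[where l=l and ta="p1\<^sup>2" and tb="p2\<^sup>2" and ra=r1 and rb=r2] l t1 t2 p by (simp add: tz_def)
      also have "\<dots> \<le> (SUP rho\<in>{0..1}. ?R rho ?z)"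
        using tz0 tz1 by (intro SUP_upper) auto
      finally show "min a b \<le> (SUP rho\<in>{0..1}. ?R rho ?z)" .
    qed
  qed
qed

end
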